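(* Let $m,n$ be positive integers and let $\Pi$ be an $(m,n)$-Dyck path. For a north step $N$ of $\Pi$ going from $(a,b)$ to $(a,b+1)$, define its rational diagonal \[ D(N)=\{(u,v)\in\mathbb{R}^2:\ u<a,\ \ mb-na< mv-nu\le m(b+1)-na\}, \] i.e. the region to the left of $N$ lying between the two lines of slope $n/m$ through the endpoints of $N$, including the upper line but not the lower one. Then $\operatorname{pdinv}(\Pi)$ equals the number of pairs $(N,E)$, where $N$ is a north step and $E$ is an east step of $\Pi$, such that the (closed) segment $E$ has a point in $D(N)$.
   Context: An $(m,n)$-Dyck path is a lattice path from $(0,0)$ to $(m,n)$ consisting of unit north and east steps that stays weakly above the line $y=\frac{n}{m}x$. Let $\lambda(\Pi)$ be the set of unit cells of the rectangle $[0,m]\times[0,n]$ lying above (northwest of) $\Pi$; for $c\in\lambda(\Pi)$, $\operatorname{arm}(c)$ (resp. $\operatorname{leg}(c)$) is the number of cells of $\lambda(\Pi)$ strictly east of $c$ in its row (resp. strictly south of $c$ in its column). The path dinv is \[ \operatorname{pdinv}(\Pi)=\sum_{c\in\lambda(\Pi)}\chi\left(\frac{\operatorname{arm}(c)}{\operatorname{leg}(c)+1}\le\frac{m}{n}<\frac{\operatorname{arm}(c)+1}{\operatorname{leg}(c)}\right), \] with the convention $x/0=\infty$, and $\chi(P)$ is $1$ if $P$ holds and $0$ otherwise. *)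

theory Defs
  imports Complex_Main
begin

datatype step = North | East

definition pt_x :: "step list \<Rightarrow> nat \<Rightarrow> nat" where
  "pt_x p k = length (filter (\<lambda>s. s = East) (take k p))"
definition pt_y :: "step list \<Rightarrow> nat \<Rightarrow> nat" where
  "pt_y p k = length (filter (\<lambda>s. s = North) (take k p))"

text \<open>(m,n)-Dyck path: ends at (m,n) and stays weakly above y = (n/m) x.
The path is piecewise linear between its lattice vertices, so it suffices to
require this at every vertex.\<close>
definition dyck :: "nat \<Rightarrow> nat \<Rightarrow> step list \<Rightarrow> bool" where
  "dyck m n p \<longleftrightarrow> pt_x p (length p) = m \<and> pt_y p (length p) = n \<and>
     (\<forall>k\<le>length p. real (pt_y p k) \<ge> real n / real m * real (pt_x p k))"

text \<open>Height of the east step in column i (the (i+1)-st east step).\<close>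
definition col_height :: "step list \<Rightarrow> nat \<Rightarrow> nat" where
  "col_height p i = pt_y p (LEAST k. k < length p \<and> p ! k = East \<and> pt_x p k = i)"

text \<open>Cells (i,j) = [i,i+1] x [j,j+1] of [0,m] x [0,n] lying above the path.\<close>
definition cells :: "nat \<Rightarrow> nat \<Rightarrow> step list \<Rightarrow> (nat \<times> nat) set" where
  "cells m n p = {(i, j). i < m \<and> j < n \<and> col_height p i \<le> j}"

definition arm :: "nat \<Rightarrow> nat \<Rightarrow> step list \<Rightarrow> nat \<times> nat \<Rightarrow> nat" where
  "arm m n p c = card {i'. i' > fst c \<and> (i', snd c) \<in> cells m n p}"

definition leg :: "nat \<Rightarrow> nat \<Rightarrow> step list \<Rightarrow> nat \<times> nat \<Rightarrow> nat" where
  "leg m n p c = card {j'. j' < snd c \<and> (fst c, j') \<in> cells m n p}"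

text \<open>pdinv, with the convention x/0 = infinity (so the strict upper bound
holds automatically when leg = 0).\<close>
definition pdinv :: "nat \<Rightarrow> nat \<Rightarrow> step list \<Rightarrow> nat" where
  "pdinv m n p = card {c \<in> cells m n p.
      real (arm m n p c) / real (leg m n p c + 1) \<le> real m / real n \<and>
      (leg m n p c = 0 \<or> real m / real n < real (arm m n p c + 1) / real (leg m n p c))}"

definition rat_diag :: "nat \<Rightarrow> nat \<Rightarrow> nat \<Rightarrow> nat \<Rightarrow> (real \<times> real) set" where
  "rat_diag m n a b = {(u, v). u < real a \<and>
      real m * real b - real n * real a < real m * v - real n * u \<and>
      real m * v - real n * u \<le> real m * (real b + 1) - real n * real a}"

definition east_seg :: "nat \<Rightarrow> nat \<Rightarrow> (real \<times> real) set" where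
  "east_seg a b = {(real a + t, real b) | t. 0 \<le> t \<and> t \<le> 1}"

end

theory Submission
  imports Defs
begin

lemma pt_x_Suc: "pt_x p (Suc k) = pt_x p k + (if k < length p \<and> p!k = East then 1 else 0)"
  by (cases "k < length p") (auto simp: pt_x_def take_Suc_conv_app_nth)

lemma pt_y_Suc: "pt_y p (Suc k) = pt_y p k + (if k < length p \<and> p!k = North then 1 else 0)"
  by (cases "k < length p") (auto simp: pt_y_def take_Suc_conv_app_nth)

lemma pt_x_mono: "k \<le> k' \<Longrightarrow> pt_x p k \<le> pt_x p k'"
  by (induction k' rule: dec_induct) (auto simp: pt_x_Suc)

lemma pt_y_mono: "k \<le> k' \<Longrightarrow> pt_y p k \<le> pt_y p k'"
  by (induction k' rule: dec_induct) (auto simp: pt_y_Suc)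

lemma pt_x_0[simp]: "pt_x p 0 = 0" by (simp add: pt_x_def)
lemma pt_y_0[simp]: "pt_y p 0 = 0" by (simp add: pt_y_def)

lemma east_exists: "i < pt_x p k \<Longrightarrow> \<exists>l<k. l < length p \<and> p!l = East \<and> pt_x p l = i"
proof (induction k arbitrary: i)
  case 0 then show ?case by simp
next
  case (Suc k)
  show ?case
  proof (cases "i < pt_x p k")
    case True then show ?thesis using Suc.IH by (meson less_Suc_eq)
  next
    case False
    then show ?thesis using Suc.prems by (auto simp: pt_x_Suc split: if_splits intro!: exI[of _ k])
  qed
qed

lemma north_exists: "j < pt_y p k \<Longrightarrow> \<exists>l<k. l < length p \<and> p!l = North \<and> pt_y p l = j"
proof (induction k arbitrary: j)
  case 0 then show ?case by simp
next
  case (Suc k)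
  show ?case
  proof (cases "j < pt_y p k")
    case True then show ?thesis using Suc.IH by (meson less_Suc_eq)
  next
    case False
    then show ?thesis using Suc.prems by (auto simp: pt_y_Suc split: if_splits intro!: exI[of _ k])
  qed
qed

lemma east_lt: "l < k \<Longrightarrow> l < length p \<Longrightarrow> p!l = East \<Longrightarrow> pt_x p l < pt_x p k"
proof -
  assume a: "l < k" "l < length p" "p!l = East"
  have "pt_x p (Suc l) \<le> pt_x p k" using a by (intro pt_x_mono) simp
  then show ?thesis using a by (simp add: pt_x_Suc)
qed

lemma north_lt: "l < k \<Longrightarrow> l < length p \<Longrightarrow> p!l = North \<Longrightarrow> pt_y p l < pt_y p k"
proof -
  assume a: "l < k" "l < length p" "p!l = North"
  have "pt_y p (Suc l) \<le> pt_y p k" using a by (intro pt_y_mono) simp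
  then show ?thesis using a by (simp add: pt_y_Suc)
qed

lemma col_height_east:
  assumes "l < length p" "p!l = East"
  shows "col_height p (pt_x p l) = pt_y p l"
proof -
  have "(LEAST k. k < length p \<and> p ! k = East \<and> pt_x p k = pt_x p l) = l"
  proof (rule Least_equality)
    show "l < length p \<and> p ! l = East \<and> pt_x p l = pt_x p l" using assms by simp
  next
    fix y assume "y < length p \<and> p ! y = East \<and> pt_x p y = pt_x p l"
    then show "l \<le> y" using east_lt[of y l p] by (metis leI less_irrefl)
  qed
  then show ?thesis by (simp add: col_height_def)
qed

lemma NE_order:
  assumes "k < length p" "p!k = North" "l < length p" "p!l = East"
  shows "(l < k) = (pt_x p l < pt_x p k)" "(l < k) = (pt_y p l \<le> pt_y p k)"
proof -
  have "k \<noteq> l" using assms by auto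
  have 1: "l < k \<Longrightarrow> pt_x p l < pt_x p k \<and> pt_y p l \<le> pt_y p k"
    using east_lt[of l k p] pt_y_mono[of l k p] assms by auto
  have 2: "k < l \<Longrightarrow> pt_x p k \<le> pt_x p l \<and> pt_y p k < pt_y p l"
    using north_lt[of k l p] pt_x_mono[of k l p] assms by auto
  show "(l < k) = (pt_x p l < pt_x p k)" "(l < k) = (pt_y p l \<le> pt_y p k)"
    using 1 2 \<open>k \<noteq> l\<close> by (meson leD linorder_neqE_nat)+
qed

lemma geo:
  fixes m n a b x y :: real
  assumes "m > 0" "n > 0" "x < a" "x + 1 \<le> a" "y \<le> b"
  shows "(\<exists>t. 0 \<le> t \<and> t \<le> 1 \<and> x + t < a \<and> m*b - n*a < m*y - n*(x+t) \<and>
             m*y - n*(x+t) \<le> m*(b+1) - n*a)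
        \<longleftrightarrow> (m*(b-y) < n*(a-x) \<and> n*(a-x-1) \<le> m*(b-y+1))"
proof
  assume "\<exists>t. 0 \<le> t \<and> t \<le> 1 \<and> x + t < a \<and> m*b - n*a < m*y - n*(x+t) \<and>
             m*y - n*(x+t) \<le> m*(b+1) - n*a"
  then obtain t where t: "0 \<le> t" "t \<le> 1" "m*b - n*a < m*y - n*(x+t)" "m*y - n*(x+t) \<le> m*(b+1) - n*a"
    by blast
  have "n*t \<ge> 0" "n * t \<le> n" using t assms by auto
  then show "m*(b-y) < n*(a-x) \<and> n*(a-x-1) \<le> m*(b-y+1)" using t by (simp add: algebra_simps)
next
  assume h: "m*(b-y) < n*(a-x) \<and> n*(a-x-1) \<le> m*(b-y+1)"
  show "\<exists>t. 0 \<le> t \<and> t \<le> 1 \<and> x + t < a \<and> m*b - n*a < m*y - n*(x+t) \<and>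
             m*y - n*(x+t) \<le> m*(b+1) - n*a"
  proof (cases "m*y - n*x \<le> m*(b+1) - n*a")
    case True
    then show ?thesis using h assms by (intro exI[of _ 0]) (simp add: algebra_simps)
  next
    case False
    define u where "u = (m*y - m*(b+1) + n*a)/n"
    have nu: "n*u = m*y - m*(b+1) + n*a" using assms by (simp add: u_def)
    have "n*x < n*u" using False nu by simp
    then have "x < u" using assms by simp
    have "n*u \<le> n*(x+1)" using nu h by (simp add: algebra_simps)
    then have "u \<le> x + 1" using assms by simp
    have "m*y \<le> m*b" using assms by simp
    have "m*(b+1) = m*b + m" by (simp add: algebra_simps)
    then have "n*u < n*a" using nu assms(1) \<open>m*y \<le> m*b\<close> by linarith
    then have "u < a" using assms(2) mult_less_cancel_left_pos by blast
    show ?thesis using \<open>x < u\<close> \<open>u \<le> x+1\<close> \<open>u < a\<close> nu assms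
      by (intro exI[of _ "u - x"]) (simp add: algebra_simps)
  qed
qed

lemma pdq:
  fixes m n A L :: nat
  assumes "m > 0" "n > 0"
  shows "(real A / real (L+1) \<le> real m / real n \<and>
      (L = 0 \<or> real m / real n < real (A+1) / real L))
     \<longleftrightarrow> (real n * real A \<le> real m * (real L + 1) \<and> real m * real L < real n * (real A + 1))"
proof -
  have 1: "(real A / real (L+1) \<le> real m / real n) \<longleftrightarrow> real n * real A \<le> real m * (real L + 1)"
    using assms by (simp add: divide_simps algebra_simps)
  have 2: "(L = 0 \<or> real m / real n < real (A+1) / real L) \<longleftrightarrow> real m * real L < real n * (real A + 1)"
  proof (cases "L = 0")
    case True then show ?thesis using assms by simp
  next
    case False then show ?thesis using assms by (simp add: divide_simps algebra_simps)
  qed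
  show ?thesis using 1 2 by simp
qed

lemma cell_props:
  assumes ex: "pt_x p (length p) = m" and ey: "pt_y p (length p) = n"
    and k: "k < length p" "p!k = North" and l: "l < length p" "p!l = East" and lk: "l < k"
  shows "(pt_x p l, pt_y p k) \<in> cells m n p"
    "arm m n p (pt_x p l, pt_y p k) = pt_x p k - pt_x p l - 1"
    "leg m n p (pt_x p l, pt_y p k) = pt_y p k - pt_y p l"
proof -
  have xk: "pt_x p k \<le> m" using ex pt_x_mono[of k "length p" p] k by simp
  have xl: "pt_x p l < pt_x p k" using NE_order[OF k l] lk by simp
  have yl: "pt_y p l \<le> pt_y p k" using NE_order[OF k l] lk by simp
  have yk: "pt_y p k < n" using ey north_lt[of k "length p" p] k by simp
  have ch: "col_height p (pt_x p l) = pt_y p l" using col_height_east l by simp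
  show "(pt_x p l, pt_y p k) \<in> cells m n p" using xk xl yk yl ch by (simp add: cells_def)
  have "{i'. i' > pt_x p l \<and> (i', pt_y p k) \<in> cells m n p} = {pt_x p l<..<pt_x p k}"
  proof (intro set_eqI iffI)
    fix i' assume "i' \<in> {i'. i' > pt_x p l \<and> (i', pt_y p k) \<in> cells m n p}"
    then have h: "i' > pt_x p l" "i' < m" "col_height p i' \<le> pt_y p k" by (auto simp: cells_def)
    obtain l' where l': "l' < length p" "p!l' = East" "pt_x p l' = i'"
      using east_exists[of i' p "length p"] h ex by auto
    have "pt_y p l' \<le> pt_y p k" using h col_height_east[OF l'(1,2)] l' by simp
    then have "pt_x p l' < pt_x p k" using NE_order[OF k l'(1,2)] by simp
    then show "i' \<in> {pt_x p l<..<pt_x p k}" using h l' by simp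
  next
    fix i' assume "i' \<in> {pt_x p l<..<pt_x p k}"
    then have h: "i' > pt_x p l" "i' < pt_x p k" by auto
    obtain l' where l': "l' < length p" "p!l' = East" "pt_x p l' = i'"
      using east_exists[of i' p "length p"] h ex xk by auto
    have "pt_y p l' \<le> pt_y p k" using NE_order[OF k l'(1,2)] h l' by simp
    then show "i' \<in> {i'. i' > pt_x p l \<and> (i', pt_y p k) \<in> cells m n p}"
      using h l' col_height_east[OF l'(1,2)] xk yk by (auto simp: cells_def)
  qed
  then show "arm m n p (pt_x p l, pt_y p k) = pt_x p k - pt_x p l - 1"
    by (simp add: arm_def)
  have "{j'. j' < pt_y p k \<and> (pt_x p l, j') \<in> cells m n p} = {pt_y p l..<pt_y p k}"
    using ch xk xl yk by (auto simp: cells_def)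
  then show "leg m n p (pt_x p l, pt_y p k) = pt_y p k - pt_y p l"
    by (simp add: leg_def)
qed

lemma inter_iff:
  "(east_seg x y \<inter> rat_diag m n a b \<noteq> {}) \<longleftrightarrow>
   (\<exists>t::real. 0 \<le> t \<and> t \<le> 1 \<and> real x + t < real a \<and>
      real m * real b - real n * real a < real m * real y - real n * (real x + t) \<and>
      real m * real y - real n * (real x + t) \<le> real m * (real b + 1) - real n * real a)"
  unfolding east_seg_def rat_diag_def by blast

theorem theorem1:
  fixes m n :: nat and p :: "step list"
  assumes "m > 0" and "n > 0" and "dyck m n p"
  shows "pdinv m n p = card {(k, l). k < length p \<and> l < length p \<and>
            p ! k = North \<and> p ! l = East \<and>
            east_seg (pt_x p l) (pt_y p l) \<inter> rat_diag m n (pt_x p k) (pt_y p k) \<noteq> {}}"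
proof -
  have ex: "pt_x p (length p) = m" and ey: "pt_y p (length p) = n"
    using assms(3) by (auto simp: dyck_def)
  define Q where "Q = (\<lambda>c. real (arm m n p c) / real (leg m n p c + 1) \<le> real m / real n \<and>
      (leg m n p c = 0 \<or> real m / real n < real (arm m n p c + 1) / real (leg m n p c)))"
  define S where "S = {(k, l). k < length p \<and> l < length p \<and>
            p ! k = North \<and> p ! l = East \<and>
            east_seg (pt_x p l) (pt_y p l) \<inter> rat_diag m n (pt_x p k) (pt_y p k) \<noteq> {}}"
  define f where "f = (\<lambda>(k::nat, l::nat). (pt_x p l, pt_y p k))"
  have claim: "(east_seg (pt_x p l) (pt_y p l) \<inter> rat_diag m n (pt_x p k) (pt_y p k) \<noteq> {})
      \<longleftrightarrow> l < k \<and> Q (pt_x p l, pt_y p k)"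
    if k: "k < length p" "p!k = North" and l: "l < length p" "p!l = East" for k l
  proof (cases "l < k")
    case False
    then have "pt_x p k \<le> pt_x p l" using NE_order[OF k l] by simp
    then show ?thesis using False unfolding inter_iff by auto
  next
    case True
    note cp = cell_props[OF ex ey k l True]
    have xl: "pt_x p l < pt_x p k" using NE_order[OF k l] True by simp
    have yl: "pt_y p l \<le> pt_y p k" using NE_order[OF k l] True by simp
    have A: "real (pt_x p k - pt_x p l - 1) = real (pt_x p k) - real (pt_x p l) - 1"
      using xl by (simp add: of_nat_diff)
    have L: "real (pt_y p k - pt_y p l) = real (pt_y p k) - real (pt_y p l)"
      using yl by (simp add: of_nat_diff)
    have g: "(east_seg (pt_x p l) (pt_y p l) \<inter> rat_diag m n (pt_x p k) (pt_y p k) \<noteq> {}) = ((real m * (real (pt_y p k) - real (pt_y p l)) < real n * (real (pt_x p k) - real (pt_x p l)) \<and>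
        real n * (real (pt_x p k) - real (pt_x p l) - 1) \<le> real m * (real (pt_y p k) - real (pt_y p l) + 1)))"
      unfolding inter_iff
      by (rule trans[OF geo]) (use assms xl yl True in auto)
    show ?thesis unfolding g Q_def cp pdq[OF assms(1,2)] A L
      using True by (auto simp: algebra_simps)
  qed
  have inj: "inj_on f S"
  proof (rule inj_onI)
    fix u v assume u: "u \<in> S" and v: "v \<in> S" and e: "f u = f v"
    obtain k1 l1 where u': "u = (k1, l1)" by force
    obtain k2 l2 where v': "v = (k2, l2)" by force
    have h: "k1 < length p" "p!k1 = North" "l1 < length p" "p!l1 = East"
      "k2 < length p" "p!k2 = North" "l2 < length p" "p!l2 = East"
      "pt_x p l1 = pt_x p l2" "pt_y p k1 = pt_y p k2"
      using u v e u' v' by (auto simp: S_def f_def)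
    have "l1 = l2" using h east_lt[of l1 l2 p] east_lt[of l2 l1 p] by (metis linorder_neqE_nat less_irrefl)
    moreover have "k1 = k2" using h north_lt[of k1 k2 p] north_lt[of k2 k1 p] by (metis linorder_neqE_nat less_irrefl)
    ultimately show "u = v" using u' v' by simp
  qed
  have img: "f ` S = {c \<in> cells m n p. Q c}"
  proof (intro set_eqI iffI)
    fix c assume "c \<in> f ` S"
    then obtain k l where kl: "k < length p" "p!k = North" "l < length p" "p!l = East"
      "east_seg (pt_x p l) (pt_y p l) \<inter> rat_diag m n (pt_x p k) (pt_y p k) \<noteq> {}"
      and c: "c = (pt_x p l, pt_y p k)"
      by (auto simp: S_def f_def)
    then have "l < k" "Q c" using claim by auto
    then show "c \<in> {c \<in> cells m n p. Q c}" using cell_props[OF ex ey kl(1-4)] c by simp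
  next
    fix c assume "c \<in> {c \<in> cells m n p. Q c}"
    then obtain i j where c: "c = (i, j)" "i < m" "j < n" "col_height p i \<le> j" "Q c"
      by (auto simp: cells_def)
    obtain l where l: "l < length p" "p!l = East" "pt_x p l = i"
      using east_exists[of i p "length p"] c ex by auto
    obtain k where k: "k < length p" "p!k = North" "pt_y p k = j"
      using north_exists[of j p "length p"] c ey by auto
    have "l < k" using NE_order[OF k(1,2) l(1,2)] col_height_east[OF l(1,2)] c l k by simp
    then have "(k, l) \<in> S" using claim[OF k(1,2) l(1,2)] c k l by (simp add: S_def)
    then show "c \<in> f ` S" using c k l by (force simp: f_def)
  qed
  have "pdinv m n p = card {c \<in> cells m n p. Q c}" by (simp add: pdinv_def Q_def)
  also have "\<dots> = card S" using card_image[OF inj] img by simp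
  finally show ?thesis by (simp add: S_def)
qed

end
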